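(* Let $\lambda$ be a limit ordinal and $(X_\mu,T)_{\mu\le\lambda}$ minimal systems such that $(X_\lambda,T)$ is the inverse limit of $(X_\mu,T)_{\mu<\lambda}$ with respect to factor maps $\phi_{\mu,\nu}:X_\nu\to X_\mu$ ($\mu\le\nu<\lambda$). Then for every $d\in\mathbb{N}$, $(N_d(X_\lambda),\mathcal{G}_d(T))$ is the inverse limit of $(N_d(X_\mu),\mathcal{G}_d(T))_{\mu<\lambda}$ with respect to the induced maps $\phi_{\mu,\nu}^{(d)}$.
   Context: $N_d(Z)=\overline{\{(T^{p+q}z,\dots,T^{p+dq}z):z\in Z,p,q\in\mathbb{Z}\}}$; $\mathcal{G}_d(T)=\langle T\times\cdots\times T,\ T\times T^2\times\cdots\times T^d\rangle$; $\phi^{(d)}=\phi\times\cdots\times\phi$. *)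

theory Defs
  imports "HOL-Analysis.Analysis"
begin

definition tds :: "'a::topological_space set \<Rightarrow> ('a \<Rightarrow> 'a) \<Rightarrow> bool" where
  "tds X T \<longleftrightarrow> compact X \<and> (\<exists>T'. homeomorphism X X T T')"

definition minimal_sys :: "'a::topological_space set \<Rightarrow> ('a \<Rightarrow> 'a) \<Rightarrow> bool" where
  "minimal_sys X T \<longleftrightarrow> tds X T \<and> X \<noteq> {} \<and>
     (\<forall>A. closedin (top_of_set X) A \<and> A \<noteq> {} \<and> T ` A \<subseteq> A \<longrightarrow> A = X)"

definition ipow :: "'a set \<Rightarrow> ('a \<Rightarrow> 'a) \<Rightarrow> int \<Rightarrow> 'a \<Rightarrow> 'a" where
  "ipow X T n = (if n \<ge> 0 then T ^^ nat n else (inv_into X T) ^^ nat (- n))"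

text \<open>d-tuples are functions nat => 'a, with coordinates 1..d and undefined elsewhere
  (the product topology on nat => 'a restricted to these is the topology of X^d).\<close>
definition prod_map :: "nat \<Rightarrow> ('a \<Rightarrow> 'b) \<Rightarrow> (nat \<Rightarrow> 'a) \<Rightarrow> (nat \<Rightarrow> 'b)" where
  "prod_map d f x = (\<lambda>j. if j \<in> {1..d} then f (x j) else undefined)"

definition N_d :: "nat \<Rightarrow> 'a::topological_space set \<Rightarrow> ('a \<Rightarrow> 'a) \<Rightarrow> (nat \<Rightarrow> 'a) set" where
  "N_d d Z T = closure {(\<lambda>j. if j \<in> {1..d} then ipow Z T (p + int j * q) z else undefined)
                         | z p q. z \<in> Z}"

text \<open>Generators of G_d(T): True gives T x ... x T, False gives T x T^2 x ... x T^d.\<close>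
definition G_d :: "nat \<Rightarrow> ('a \<Rightarrow> 'a) \<Rightarrow> bool \<Rightarrow> (nat \<Rightarrow> 'a) \<Rightarrow> (nat \<Rightarrow> 'a)" where
  "G_d d T b x = (if b then (\<lambda>j. if j \<in> {1..d} then T (x j) else undefined)
                  else (\<lambda>j. if j \<in> {1..d} then (T ^^ j) (x j) else undefined))"

text \<open>Factor map between systems whose acting group is generated by the family S resp. T.\<close>
definition factor_map :: "'b::topological_space set \<Rightarrow> ('k \<Rightarrow> 'b \<Rightarrow> 'b) \<Rightarrow>
    'a::topological_space set \<Rightarrow> ('k \<Rightarrow> 'a \<Rightarrow> 'a) \<Rightarrow> ('b \<Rightarrow> 'a) \<Rightarrow> bool" where
  "factor_map Y S X T f \<longleftrightarrow> continuous_on Y f \<and> f ` Y = X \<and> (\<forall>k. \<forall>y\<in>Y. f (S k y) = T k (f y))"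

text \<open>Inverse system indexed by a well-ordered index type (the ordinals below lambda),
  with factor maps phi mu nu : X nu -> X mu for mu <= nu.\<close>
definition inverse_system :: "('i::order \<Rightarrow> 'a::topological_space set) \<Rightarrow> ('i \<Rightarrow> 'k \<Rightarrow> 'a \<Rightarrow> 'a)
    \<Rightarrow> ('i \<Rightarrow> 'i \<Rightarrow> 'a \<Rightarrow> 'a) \<Rightarrow> bool" where
  "inverse_system X T \<phi> \<longleftrightarrow>
     (\<forall>\<mu> \<nu>. \<mu> \<le> \<nu> \<longrightarrow> factor_map (X \<nu>) (T \<nu>) (X \<mu>) (T \<mu>) (\<phi> \<mu> \<nu>)) \<and>
     (\<forall>\<mu>. \<forall>x\<in>X \<mu>. \<phi> \<mu> \<mu> x = x) \<and>
     (\<forall>\<mu> \<nu> \<kappa>. \<mu> \<le> \<nu> \<and> \<nu> \<le> \<kappa> \<longrightarrow> (\<forall>x\<in>X \<kappa>. \<phi> \<mu> \<nu> (\<phi> \<nu> \<kappa> x) = \<phi> \<mu> \<kappa> x))"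

text \<open>(Y,S) is the inverse limit of the inverse system (X,T,phi) via the maps psi mu : Y -> X mu:
  the psi are compatible factor maps and y |-> (psi mu y)_mu is a bijection of Y onto the set of
  compatible families (for compact Y this continuous bijection onto the Hausdorff inverse limit
  is an isomorphism of systems).\<close>
definition is_inverse_limit :: "('i::order \<Rightarrow> 'a::topological_space set) \<Rightarrow> ('i \<Rightarrow> 'k \<Rightarrow> 'a \<Rightarrow> 'a)
    \<Rightarrow> ('i \<Rightarrow> 'i \<Rightarrow> 'a \<Rightarrow> 'a) \<Rightarrow> 'b::topological_space set \<Rightarrow> ('k \<Rightarrow> 'b \<Rightarrow> 'b)
    \<Rightarrow> ('i \<Rightarrow> 'b \<Rightarrow> 'a) \<Rightarrow> bool" where
  "is_inverse_limit X T \<phi> Y S \<psi> \<longleftrightarrow>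
     inverse_system X T \<phi> \<and>
     (\<forall>\<mu>. factor_map Y S (X \<mu>) (T \<mu>) (\<psi> \<mu>)) \<and>
     (\<forall>\<mu> \<nu>. \<mu> \<le> \<nu> \<longrightarrow> (\<forall>y\<in>Y. \<phi> \<mu> \<nu> (\<psi> \<nu> y) = \<psi> \<mu> y)) \<and>
     (\<forall>x. (\<forall>\<mu>. x \<mu> \<in> X \<mu>) \<and> (\<forall>\<mu> \<nu>. \<mu> \<le> \<nu> \<longrightarrow> \<phi> \<mu> \<nu> (x \<nu>) = x \<mu>)
          \<longrightarrow> (\<exists>!y. y \<in> Y \<and> (\<forall>\<mu>. \<psi> \<mu> y = x \<mu>)))"

end

theory Submission
  imports Defs
begin

definition PP :: "nat \<Rightarrow> 'a set \<Rightarrow> (nat \<Rightarrow> 'a) set" where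
  "PP d A = PiE UNIV (\<lambda>j. if j \<in> {1..d} then A else {undefined})"

lemma PP_iff: "x \<in> PP d A \<longleftrightarrow> (\<forall>j\<in>{1..d}. x j \<in> A) \<and> (\<forall>j. j \<notin> {1..d} \<longrightarrow> x j = undefined)"
  unfolding PP_def PiE_iff by (auto split: if_splits)

lemma compact_PP:
  fixes A :: "'a::metric_space set"
  assumes "compact A" shows "compact (PP d A)"
proof -
  have "compactin (product_topology (\<lambda>i. euclidean) UNIV) (PP d A)"
    unfolding PP_def compactin_PiE using assms by auto
  then show ?thesis by (simp add: euclidean_product_topology)
qed

lemma tds_facts:
  assumes "tds A T"
  shows "compact A" "T ` A = A" "inj_on T A" "continuous_on A T"
proof -
  obtain T' where h: "homeomorphism A A T T'" using assms unfolding tds_def by auto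
  show "compact A" using assms unfolding tds_def by auto
  show "T ` A = A" using h unfolding homeomorphism_def by auto
  show "continuous_on A T" using h unfolding homeomorphism_def by auto
  show "inj_on T A" using h unfolding homeomorphism_def inj_on_def by metis
qed

lemma funpow_in: "T ` A \<subseteq> A \<Longrightarrow> z \<in> A \<Longrightarrow> (T ^^ n) z \<in> A"
  by (induction n) auto

lemma ipow_in:
  assumes "tds A T" "z \<in> A" shows "ipow A T n z \<in> A"
proof -
  have "T ` A \<subseteq> A" using tds_facts[OF assms(1)] by auto
  moreover have "inv_into A T ` A \<subseteq> A" using tds_facts(2)[OF assms(1)]
    by (metis image_subsetI inv_into_into)
  ultimately show ?thesis unfolding ipow_def using assms(2) funpow_in by auto
qed

lemma funpow_comm:
  assumes "T ` A \<subseteq> A" "\<forall>y\<in>A. f (T y) = U (f y)" "z \<in> A"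
  shows "f ((T ^^ n) z) = (U ^^ n) (f z)"
  using assms by (induction n) (auto simp: funpow_in)

lemma ipow_comm:
  assumes tA: "tds A TA" and tB: "tds B TB" and im: "f ` A = B"
    and cm: "\<forall>y\<in>A. f (TA y) = TB (f y)" and z: "z \<in> A"
  shows "f (ipow A TA n z) = ipow B TB n (f z)"
proof -
  have icm: "\<forall>w\<in>A. f (inv_into A TA w) = inv_into B TB (f w)"
  proof
    fix w assume w: "w \<in> A"
    let ?u = "inv_into A TA w"
    have u: "?u \<in> A" using w tds_facts(2)[OF tA] by (metis inv_into_into)
    have "TA ?u = w" using w tds_facts(2)[OF tA] by (metis f_inv_into_f)
    hence "f w = TB (f ?u)" using cm u by auto
    moreover have "f ?u \<in> B" using u im by auto
    ultimately show "f ?u = inv_into B TB (f w)" using tds_facts(3)[OF tB] by simp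
  qed
  have "inv_into A TA ` A \<subseteq> A" using tds_facts(2)[OF tA]
    by (metis image_subsetI inv_into_into)
  then show ?thesis unfolding ipow_def
    using funpow_comm[OF _ cm z] funpow_comm[OF _ icm z] tds_facts(2)[OF tA] by auto
qed

lemma gen_sub:
  assumes "tds A T"
  shows "{(\<lambda>j. if j \<in> {1..d} then ipow A T (p + int j * q) z else undefined) | z p q. z \<in> A} \<subseteq> PP d A"
  using ipow_in[OF assms] by (auto simp: PP_iff)

lemma closed_PP: "tds A T \<Longrightarrow> closed (PP d A)"
  for A :: "'a::metric_space set"
  by (simp add: compact_PP compact_imp_closed tds_facts(1))

lemma N_sub: "tds A T \<Longrightarrow> N_d d A T \<subseteq> PP d A"
  for A :: "'a::metric_space set"
  unfolding N_d_def by (rule closure_minimal[OF gen_sub closed_PP])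

lemma compact_N: "tds A T \<Longrightarrow> compact (N_d d A T)"
  for A :: "'a::metric_space set"
proof -
  assume t: "tds A T"
  have "N_d d A T = PP d A \<inter> N_d d A T" using N_sub[where d=d, OF t] by auto
  moreover have "compact (PP d A \<inter> N_d d A T)"
    by (rule compact_Int_closed) (auto simp: compact_PP tds_facts(1)[OF t] N_d_def)
  ultimately show ?thesis by simp
qed

lemma cont_prod_map:
  fixes f :: "'a::metric_space \<Rightarrow> 'b::metric_space"
  assumes "continuous_on A f"
  shows "continuous_on (PP d A) (prod_map d f)"
  unfolding prod_map_def
proof (rule continuous_on_coordinatewise_then_product)
  fix i
  show "continuous_on (PP d A) (\<lambda>x. if i \<in> {1..d} then f (x i) else undefined)"
  proof (cases "i \<in> {1..d}")
    case True
    have "continuous_on (PP d A) (\<lambda>x. x i)"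
      by (rule continuous_on_subset[OF continuous_on_product_coordinates]) simp
    moreover have "(\<lambda>x. x i) ` PP d A \<subseteq> A" using True by (auto simp: PP_iff)
    ultimately have "continuous_on (PP d A) (\<lambda>x. f (x i))"
      by (rule continuous_on_compose2[OF assms])
    then show ?thesis using True by simp
  next
    case False
    then show ?thesis by (simp only: if_False) (rule continuous_on_const)
  qed
qed

lemma factor_lift:
  fixes A :: "'a::metric_space set" and B :: "'b::metric_space set"
  assumes tA: "tds A TA" and tB: "tds B TB"
    and fm: "factor_map A (\<lambda>_::unit. TA) B (\<lambda>_. TB) f"
  shows "factor_map (N_d d A TA) (G_d d TA) (N_d d B TB) (G_d d TB) (prod_map d f)"
proof -
  have cf: "continuous_on A f" and im: "f ` A = B" and cm: "\<forall>y\<in>A. f (TA y) = TB (f y)"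
    using fm unfolding factor_map_def by auto
  let ?GA = "{(\<lambda>j. if j \<in> {1..d} then ipow A TA (p + int j * q) z else undefined) | z p q. z \<in> A}"
  let ?GB = "{(\<lambda>j. if j \<in> {1..d} then ipow B TB (p + int j * q) z else undefined) | z p q. z \<in> B}"
  have gim: "prod_map d f ` ?GA = ?GB"
  proof
    show "prod_map d f ` ?GA \<subseteq> ?GB"
    proof
      fix w assume "w \<in> prod_map d f ` ?GA"
      then obtain z p q where z: "z \<in> A" and
        w: "w = prod_map d f (\<lambda>j. if j \<in> {1..d} then ipow A TA (p + int j * q) z else undefined)"
        by auto
      have "w = (\<lambda>j. if j \<in> {1..d} then ipow B TB (p + int j * q) (f z) else undefined)"
        unfolding w prod_map_def using ipow_comm[OF tA tB im cm z] by auto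
      then show "w \<in> ?GB" using z im by blast
    qed
  next
    show "?GB \<subseteq> prod_map d f ` ?GA"
    proof
      fix w assume "w \<in> ?GB"
      then obtain z p q where z: "z \<in> B" and
        w: "w = (\<lambda>j. if j \<in> {1..d} then ipow B TB (p + int j * q) z else undefined)"
        by auto
      obtain z0 where z0: "z0 \<in> A" "z = f z0" using z im by auto
      have "w = prod_map d f (\<lambda>j. if j \<in> {1..d} then ipow A TA (p + int j * q) z0 else undefined)"
        unfolding w prod_map_def using ipow_comm[OF tA tB im cm z0(1)] z0 by auto
      then show "w \<in> prod_map d f ` ?GA" using z0 by blast
    qed
  qed
  have cP: "continuous_on (PP d A) (prod_map d f)" using cont_prod_map[OF cf] .
  have NA: "N_d d A TA = closure ?GA" unfolding N_d_def by simp
  have NB: "N_d d B TB = closure ?GB" unfolding N_d_def by simp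
  have cN: "continuous_on (N_d d A TA) (prod_map d f)"
    using cP N_sub[where d=d, OF tA] continuous_on_subset by blast
  have "prod_map d f ` N_d d A TA = N_d d B TB"
  proof
    show "prod_map d f ` N_d d A TA \<subseteq> N_d d B TB"
      unfolding NA NB
    proof (rule image_closure_subset)
      show "continuous_on (closure ?GA) (prod_map d f)" using cN NA by simp
      show "closed (closure ?GB)" by simp
      show "prod_map d f ` ?GA \<subseteq> closure ?GB" unfolding gim by (rule closure_subset)
    qed
  next
    have "compact (prod_map d f ` N_d d A TA)"
      using compact_continuous_image[OF cN compact_N[OF tA]] .
    hence "closed (prod_map d f ` N_d d A TA)" by (rule compact_imp_closed)
    moreover have "?GB \<subseteq> prod_map d f ` N_d d A TA"
      unfolding gim[symmetric] NA by (intro image_mono closure_subset)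
    ultimately have "closure ?GB \<subseteq> prod_map d f ` N_d d A TA"
      by (intro closure_minimal) assumption+
    then show "N_d d B TB \<subseteq> prod_map d f ` N_d d A TA" using NB by simp
  qed
  moreover have "\<forall>k. \<forall>y\<in>N_d d A TA. prod_map d f (G_d d TA k y) = G_d d TB k (prod_map d f y)"
  proof (intro allI ballI)
    fix k y assume y: "y \<in> N_d d A TA"
    hence "y \<in> PP d A" using N_sub[where d=d, OF tA] by blast
    hence yA: "\<forall>j\<in>{1..d}. y j \<in> A" unfolding PP_iff by blast
    have "TA ` A \<subseteq> A" using tds_facts(2)[OF tA] by simp
    then show "prod_map d f (G_d d TA k y) = G_d d TB k (prod_map d f y)"
      unfolding G_d_def prod_map_def using yA cm funpow_comm[OF _ cm] by auto
  qed
  ultimately show ?thesis unfolding factor_map_def using cN by auto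
qed

theorem lemma5p6:
  fixes X :: "'i::wellorder \<Rightarrow> 'a::metric_space set"
    and T :: "'i \<Rightarrow> 'a \<Rightarrow> 'a"
    and \<phi> :: "'i \<Rightarrow> 'i \<Rightarrow> 'a \<Rightarrow> 'a"
    and Y :: "'b::metric_space set"
    and S :: "'b \<Rightarrow> 'b"
    and \<psi> :: "'i \<Rightarrow> 'b \<Rightarrow> 'a"
    and d :: nat
  assumes limit: "\<forall>\<mu>::'i. \<exists>\<nu>. \<mu> < \<nu>"
    and minX: "\<forall>\<mu>. minimal_sys (X \<mu>) (T \<mu>)"
    and minY: "minimal_sys Y S"
    and invlim: "is_inverse_limit X (\<lambda>\<mu> (_::unit). T \<mu>) \<phi> Y (\<lambda>_. S) \<psi>"
    and d: "d \<ge> 1"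
  shows "is_inverse_limit (\<lambda>\<mu>. N_d d (X \<mu>) (T \<mu>)) (\<lambda>\<mu>. G_d d (T \<mu>))
           (\<lambda>\<mu> \<nu>. prod_map d (\<phi> \<mu> \<nu>)) (N_d d Y S) (G_d d S) (\<lambda>\<mu>. prod_map d (\<psi> \<mu>))"
proof -
  have tX: "\<And>\<mu>. tds (X \<mu>) (T \<mu>)" using minX unfolding minimal_sys_def by auto
  have tY: "tds Y S" and Yne: "Y \<noteq> {}" using minY unfolding minimal_sys_def by auto
  have fphi: "\<And>\<mu> \<nu>. \<mu> \<le> \<nu> \<Longrightarrow> factor_map (X \<nu>) (\<lambda>_::unit. T \<nu>) (X \<mu>) (\<lambda>_. T \<mu>) (\<phi> \<mu> \<nu>)"
    and idphi: "\<And>\<mu> x. x \<in> X \<mu> \<Longrightarrow> \<phi> \<mu> \<mu> x = x"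
    and cphi: "\<And>\<mu> \<nu> \<kappa> x. \<mu> \<le> \<nu> \<Longrightarrow> \<nu> \<le> \<kappa> \<Longrightarrow> x \<in> X \<kappa> \<Longrightarrow> \<phi> \<mu> \<nu> (\<phi> \<nu> \<kappa> x) = \<phi> \<mu> \<kappa> x"
    and fpsi: "\<And>\<mu>. factor_map Y (\<lambda>_::unit. S) (X \<mu>) (\<lambda>_. T \<mu>) (\<psi> \<mu>)"
    and cpsi: "\<And>\<mu> \<nu> y. \<mu> \<le> \<nu> \<Longrightarrow> y \<in> Y \<Longrightarrow> \<phi> \<mu> \<nu> (\<psi> \<nu> y) = \<psi> \<mu> y"
    and uniq: "\<And>x. (\<forall>\<mu>. x \<mu> \<in> X \<mu>) \<Longrightarrow> (\<forall>\<mu> \<nu>. \<mu> \<le> \<nu> \<longrightarrow> \<phi> \<mu> \<nu> (x \<nu>) = x \<mu>)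
          \<Longrightarrow> (\<exists>!y. y \<in> Y \<and> (\<forall>\<mu>. \<psi> \<mu> y = x \<mu>))"
    using invlim unfolding is_inverse_limit_def inverse_system_def by auto
  have NXP: "x \<in> PP d (X \<mu>)" if "x \<in> N_d d (X \<mu>) (T \<mu>)" for x \<mu>
    using N_sub[where d=d, OF tX[of \<mu>]] that by blast
  have NYP: "x \<in> PP d Y" if "x \<in> N_d d Y S" for x
    using N_sub[where d=d, OF tY] that by blast
  have NX: "\<And>\<mu> x j. x \<in> N_d d (X \<mu>) (T \<mu>) \<Longrightarrow> j \<in> {1..d} \<Longrightarrow> x j \<in> X \<mu>"
    using NXP unfolding PP_iff by blast
  have NX2: "\<And>\<mu> x j. x \<in> N_d d (X \<mu>) (T \<mu>) \<Longrightarrow> j \<notin> {1..d} \<Longrightarrow> x j = undefined"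
    using NXP unfolding PP_iff by blast
  have NY: "\<And>x j. x \<in> N_d d Y S \<Longrightarrow> j \<in> {1..d} \<Longrightarrow> x j \<in> Y"
    using NYP unfolding PP_iff by blast
  have NY2: "\<And>x j. x \<in> N_d d Y S \<Longrightarrow> j \<notin> {1..d} \<Longrightarrow> x j = undefined"
    using NYP unfolding PP_iff by blast
  have A: "inverse_system (\<lambda>\<mu>. N_d d (X \<mu>) (T \<mu>)) (\<lambda>\<mu>. G_d d (T \<mu>)) (\<lambda>\<mu> \<nu>. prod_map d (\<phi> \<mu> \<nu>))"
    unfolding inverse_system_def
  proof (intro conjI allI impI ballI)
    fix \<mu> \<nu> :: 'i assume "\<mu> \<le> \<nu>"
    then show "factor_map (N_d d (X \<nu>) (T \<nu>)) (G_d d (T \<nu>)) (N_d d (X \<mu>) (T \<mu>)) (G_d d (T \<mu>)) (prod_map d (\<phi> \<mu> \<nu>))"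
      using factor_lift[OF tX tX fphi] by blast
  next
    fix \<mu> x assume "x \<in> N_d d (X \<mu>) (T \<mu>)"
    then show "prod_map d (\<phi> \<mu> \<mu>) x = x"
      unfolding prod_map_def using NX NX2 idphi by fastforce
  next
    fix \<mu> \<nu> \<kappa> x assume o: "\<mu> \<le> \<nu> \<and> \<nu> \<le> \<kappa>" and x: "x \<in> N_d d (X \<kappa>) (T \<kappa>)"
    then show "prod_map d (\<phi> \<mu> \<nu>) (prod_map d (\<phi> \<nu> \<kappa>) x) = prod_map d (\<phi> \<mu> \<kappa>) x"
      unfolding prod_map_def using NX[OF x] cphi by fastforce
  qed
  have B: "\<And>\<mu>. factor_map (N_d d Y S) (G_d d S) (N_d d (X \<mu>) (T \<mu>)) (G_d d (T \<mu>)) (prod_map d (\<psi> \<mu>))"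
    using factor_lift[OF tY tX fpsi] by blast
  have C: "\<And>\<mu> \<nu> y. \<mu> \<le> \<nu> \<Longrightarrow> y \<in> N_d d Y S \<Longrightarrow> prod_map d (\<phi> \<mu> \<nu>) (prod_map d (\<psi> \<nu>) y) = prod_map d (\<psi> \<mu>) y"
    unfolding prod_map_def using NY cpsi by fastforce
  have D: "\<exists>!y. y \<in> N_d d Y S \<and> (\<forall>\<mu>. prod_map d (\<psi> \<mu>) y = x \<mu>)"
    if xN: "\<forall>\<mu>. x \<mu> \<in> N_d d (X \<mu>) (T \<mu>)"
      and xc: "\<forall>\<mu> \<nu>. \<mu> \<le> \<nu> \<longrightarrow> prod_map d (\<phi> \<mu> \<nu>) (x \<nu>) = x \<mu>" for x
  proof -
    define C where "C \<nu> = {z \<in> N_d d Y S. prod_map d (\<psi> \<nu>) z = x \<nu>}" for \<nu>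
    have cN: "\<And>\<nu>. continuous_on (N_d d Y S) (prod_map d (\<psi> \<nu>))"
      using B unfolding factor_map_def by blast
    have imN: "\<And>\<nu>. prod_map d (\<psi> \<nu>) ` N_d d Y S = N_d d (X \<nu>) (T \<nu>)"
      using B unfolding factor_map_def by blast
    have clC: "closed (C \<nu>)" for \<nu>
      unfolding C_def
      by (rule continuous_closed_preimage_constant[OF cN]) (simp add: N_d_def)
    have neC: "C \<nu> \<noteq> {}" for \<nu>
    proof -
      have "x \<nu> \<in> prod_map d (\<psi> \<nu>) ` N_d d Y S" using xN imN[of \<nu>] by simp
      then obtain z where "z \<in> N_d d Y S" "x \<nu> = prod_map d (\<psi> \<nu>) z" by (rule imageE)
      then have "z \<in> C \<nu>" unfolding C_def by simp
      then show ?thesis by blast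
    qed
    have monoC: "C \<kappa> \<subseteq> C \<nu>" if "\<nu> \<le> \<kappa>" for \<nu> \<kappa>
    proof
      fix z assume "z \<in> C \<kappa>"
      hence z: "z \<in> N_d d Y S" "prod_map d (\<psi> \<kappa>) z = x \<kappa>" unfolding C_def by auto
      have "prod_map d (\<psi> \<nu>) z = prod_map d (\<phi> \<nu> \<kappa>) (prod_map d (\<psi> \<kappa>) z)"
        using C[OF that z(1)] by simp
      also have "\<dots> = x \<nu>" using z(2) xc that by simp
      finally show "z \<in> C \<nu>" using z unfolding C_def by auto
    qed
    have NYne: "N_d d Y S \<noteq> {}"
    proof -
      obtain z where "z \<in> Y" using Yne by auto
      let ?g = "{(\<lambda>j. if j \<in> {1..d} then ipow Y S (p + int j * q) z else undefined) | z p q. z \<in> Y}"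
      have "(\<lambda>j. if j \<in> {1..d} then ipow Y S (0 + int j * 0) z else undefined) \<in> ?g"
        using \<open>z \<in> Y\<close> by auto
      hence "(\<lambda>j. if j \<in> {1..d} then ipow Y S (0 + int j * 0) z else undefined) \<in> N_d d Y S"
        unfolding N_d_def using closure_subset by (rule subsetD[rotated])
      thus ?thesis by auto
    qed
    have "N_d d Y S \<inter> \<Inter>(range C) \<noteq> {}"
    proof (rule compact_imp_fip[OF compact_N[OF tY]])
      show "\<And>T. T \<in> range C \<Longrightarrow> closed T" using clC by auto
    next
      fix F' assume "finite F'" "F' \<subseteq> range C"
      then obtain I where I: "finite I" "F' = C ` I" by (meson finite_subset_image)
      show "N_d d Y S \<inter> \<Inter> F' \<noteq> {}"
      proof (cases "I = {}")
        case True then show ?thesis using I NYne by auto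
      next
        case False
        let ?k = "Max I"
        have k1: "C ?k \<subseteq> N_d d Y S" unfolding C_def by blast
        have k2: "C ?k \<subseteq> C i" if "i \<in> I" for i
          using monoC Max_ge[OF I(1) that] by blast
        have "C ?k \<subseteq> N_d d Y S \<inter> \<Inter> F'"
          using k1 k2 I(2) by blast
        moreover have "C ?k \<noteq> {}" by (rule neC)
        ultimately show ?thesis by blast
      qed
    qed
    then obtain z where z: "z \<in> N_d d Y S" "\<And>\<nu>. z \<in> C \<nu>" by auto
    have ex: "z \<in> N_d d Y S \<and> (\<forall>\<mu>. prod_map d (\<psi> \<mu>) z = x \<mu>)"
      using z unfolding C_def by auto
    have un: "y = y'" if y: "y \<in> N_d d Y S" "\<forall>\<mu>. prod_map d (\<psi> \<mu>) y = x \<mu>"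
      and y': "y' \<in> N_d d Y S" "\<forall>\<mu>. prod_map d (\<psi> \<mu>) y' = x \<mu>" for y y'
    proof
      fix j
      show "y j = y' j"
      proof (cases "j \<in> {1..d}")
        case True
        have fam1: "\<forall>\<mu>. x \<mu> j \<in> X \<mu>" using NX xN True by blast
        have fam2: "\<forall>\<mu> \<nu>. \<mu> \<le> \<nu> \<longrightarrow> \<phi> \<mu> \<nu> (x \<nu> j) = x \<mu> j"
        proof (intro allI impI)
          fix \<mu> \<nu> :: 'i assume "\<mu> \<le> \<nu>"
          hence "prod_map d (\<phi> \<mu> \<nu>) (x \<nu>) j = x \<mu> j" using xc by simp
          thus "\<phi> \<mu> \<nu> (x \<nu> j) = x \<mu> j" using True unfolding prod_map_def by simp
        qed
        have "\<forall>\<mu>. \<psi> \<mu> (y j) = x \<mu> j" "\<forall>\<mu>. \<psi> \<mu> (y' j) = x \<mu> j"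
        proof -
          have "\<And>\<mu>. prod_map d (\<psi> \<mu>) y j = x \<mu> j" "\<And>\<mu>. prod_map d (\<psi> \<mu>) y' j = x \<mu> j"
            using y(2) y'(2) by simp_all
          then show "\<forall>\<mu>. \<psi> \<mu> (y j) = x \<mu> j" "\<forall>\<mu>. \<psi> \<mu> (y' j) = x \<mu> j"
            using True unfolding prod_map_def by simp_all
        qed
        moreover have "y j \<in> Y" "y' j \<in> Y" using NY y(1) y'(1) True by auto
        ultimately show ?thesis using uniq[OF fam1 fam2] by blast
      next
        case False
        then show ?thesis using NY2[OF y(1) False] NY2[OF y'(1) False] by simp
      qed
    qed
    show ?thesis using ex un by blast
  qed
  show ?thesis unfolding is_inverse_limit_def
  proof (intro conjI allI impI ballI)
    show "inverse_system (\<lambda>\<mu>. N_d d (X \<mu>) (T \<mu>)) (\<lambda>\<mu>. G_d d (T \<mu>)) (\<lambda>\<mu> \<nu>. prod_map d (\<phi> \<mu> \<nu>))"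
      by (rule A)
  next
    fix \<mu> show "factor_map (N_d d Y S) (G_d d S) (N_d d (X \<mu>) (T \<mu>)) (G_d d (T \<mu>)) (prod_map d (\<psi> \<mu>))"
      by (rule B)
  next
    fix \<mu> \<nu> :: 'i and y assume "\<mu> \<le> \<nu>" "y \<in> N_d d Y S"
    then show "prod_map d (\<phi> \<mu> \<nu>) (prod_map d (\<psi> \<nu>) y) = prod_map d (\<psi> \<mu>) y"
      by (rule C)
  next
    fix x :: "'i \<Rightarrow> nat \<Rightarrow> 'a"
    assume h: "(\<forall>\<mu>. x \<mu> \<in> N_d d (X \<mu>) (T \<mu>)) \<and> (\<forall>\<mu> \<nu>. \<mu> \<le> \<nu> \<longrightarrow> prod_map d (\<phi> \<mu> \<nu>) (x \<nu>) = x \<mu>)"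
    show "\<exists>!y. y \<in> N_d d Y S \<and> (\<forall>\<mu>. prod_map d (\<psi> \<mu>) y = x \<mu>)"
      using D[of x] h by simp
  qed
qed

end
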